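(* Let $\mathbb{K}$ be a field of characteristic $0$, $I\subset\mathbb{K}[x_1,\dots,x_n]$ a full monomial ideal with $\mathbb{K}[\mathbf{x}]/I$ finite-dimensional, and $\mathfrak{g}=\operatorname{Der}(\mathbb{K}[\mathbf{x}]/I)=\bigoplus_{\alpha\in\mathbb{Z}^n}\mathfrak{g}_\alpha$ its weight decomposition. Let $\alpha\in\mathbb{Z}^n$. Then: (1) If $\alpha\in\mathbb{Z}_{\ge0}^n$, then $\dim\mathfrak{g}_\alpha=\#E_\alpha$. (2) If $\alpha\notin\mathbb{Z}_{\ge0}^n$, $\alpha+e_k\in\mathbb{Z}_{\ge0}^n$ for some $1\le k\le n$, and $\dim\mathfrak{g}_{\alpha+e_k}=0$, then $\dim\mathfrak{g}_\alpha=\#E_\alpha$; moreover this number equals $1$ if $\alpha+e_k\in\operatorname{supp}^c(I)$ and $0$ otherwise.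
   Context: Let $e_1,\dots,e_n$ be the standard basis of $\mathbb{Z}^n$. For a monomial ideal $I\subset\mathbb{K}[\mathbf{x}]$, $\operatorname{supp}(I)=\{m\in\mathbb{Z}^n_{\ge0}\mid \mathbf{x}^m\in I\}$ and $\operatorname{supp}^c(I)=\mathbb{Z}^n_{\ge0}\setminus\operatorname{supp}(I)$. $I$ is full if $x_i\notin I$ for all $i$. The algebra $\mathbb{K}[\mathbf{x}]/I$ is $\mathbb{Z}^n$-graded with $\bar{\mathbf{x}}^m$ (image of $\mathbf{x}^m$) of degree $m$, equivalently the torus $T=\mathbb{G}_m^n$ acts by $\mathbf{t}\cdot x_i=t_ix_i$. $\operatorname{Der}(\mathbb{K}[\mathbf{x}]/I)$ is the Lie algebra of $\mathbb{K}$-derivations (equal to the Lie algebra of $\operatorname{Aut}_{\mathbb{K}}(\mathbb{K}[\mathbf{x}]/I)$), and for $\alpha\in\mathbb{Z}^n$, $\mathfrak{g}_\alpha$ is the weight space for the adjoint action of $T$, i.e. the space of derivations $\partial$ with $\partial(\bar{\mathbf{x}}^m)\in\mathbb{K}\,\bar{\mathbf{x}}^{m+\alpha}$ for all $m\in\mathbb{Z}^n_{\ge0}$ (where $\bar{\mathbf{x}}^{m+\alpha}:=0$ if $m+\alpha\notin\mathbb{Z}^n_{\ge0}$). For $\alpha\in\mathbb{Z}^n$, $E_\alpha:=\{e_i\mid \alpha+e_i\in\operatorname{supp}^c(I)\}$. *)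

theory Defs
  imports Complex_Main "HOL-Library.Function_Algebras"
begin

text \<open>Exponent vectors in Z_{>=0}^n are functions 'n => nat, weights in Z^n are
functions 'n => int, with 'n a finite index type of cardinality n.
A monomial ideal I is encoded by its support S = supp(I), an up-closed set of
exponent vectors (monomial ideals correspond bijectively to such sets).\<close>

definition monomial_support :: "('n \<Rightarrow> nat) set \<Rightarrow> bool" where
  "monomial_support S \<longleftrightarrow> (\<forall>m m'. m \<in> S \<longrightarrow> (\<forall>i. m i \<le> m' i) \<longrightarrow> m' \<in> S)"

definition unit_nat :: "'n \<Rightarrow> ('n \<Rightarrow> nat)" where
  "unit_nat k = (\<lambda>j. if j = k then 1 else 0)"

definition unit_int :: "'n \<Rightarrow> ('n \<Rightarrow> int)" where
  "unit_int k = (\<lambda>j. if j = k then 1 else 0)"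

definition full_support :: "('n \<Rightarrow> nat) set \<Rightarrow> bool" where
  "full_support S \<longleftrightarrow> (\<forall>i. unit_nat i \<notin> S)"

definition nonneg :: "('n \<Rightarrow> int) \<Rightarrow> bool" where
  "nonneg \<beta> \<longleftrightarrow> (\<forall>i. 0 \<le> \<beta> i)"

definition to_nat_vec :: "('n \<Rightarrow> int) \<Rightarrow> ('n \<Rightarrow> nat)" where
  "to_nat_vec \<beta> = (\<lambda>i. nat (\<beta> i))"

definition add_int :: "('n \<Rightarrow> int) \<Rightarrow> ('n \<Rightarrow> int) \<Rightarrow> ('n \<Rightarrow> int)" where
  "add_int \<alpha> \<beta> = (\<lambda>i. \<alpha> i + \<beta> i)"

definition in_suppc :: "('n \<Rightarrow> nat) set \<Rightarrow> ('n \<Rightarrow> int) \<Rightarrow> bool" where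
  "in_suppc S \<beta> \<longleftrightarrow> nonneg \<beta> \<and> to_nat_vec \<beta> \<notin> S"

definition E_set :: "('n \<Rightarrow> nat) set \<Rightarrow> ('n \<Rightarrow> int) \<Rightarrow> 'n set" where
  "E_set S \<alpha> = {i. in_suppc S (add_int \<alpha> (unit_int i))}"

text \<open>The quotient algebra K[x]/I, realised on its monomial basis
{xbar^m | m in supp^c(I)}: an element is its coefficient function, vanishing on supp(I).\<close>
definition qalg :: "('n \<Rightarrow> nat) set \<Rightarrow> (('n \<Rightarrow> nat) \<Rightarrow> 'k::field) set" where
  "qalg S = {f. \<forall>m\<in>S. f m = 0}"

definition qmult :: "('n \<Rightarrow> nat) set \<Rightarrow> (('n \<Rightarrow> nat) \<Rightarrow> 'k::field)
    \<Rightarrow> (('n \<Rightarrow> nat) \<Rightarrow> 'k) \<Rightarrow> (('n \<Rightarrow> nat) \<Rightarrow> 'k)" where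
  "qmult S f g = (\<lambda>m. if m \<in> S then 0
      else (\<Sum>a\<in>{a. \<forall>i. a i \<le> m i}. f a * g (\<lambda>i. m i - a i)))"

definition qmono :: "('n \<Rightarrow> nat) set \<Rightarrow> ('n \<Rightarrow> nat) \<Rightarrow> (('n \<Rightarrow> nat) \<Rightarrow> 'k::field)" where
  "qmono S m = (\<lambda>m'. if m' = m \<and> m \<notin> S then 1 else 0)"

definition qmono_int :: "('n \<Rightarrow> nat) set \<Rightarrow> ('n \<Rightarrow> int) \<Rightarrow> (('n \<Rightarrow> nat) \<Rightarrow> 'k::field)" where
  "qmono_int S \<beta> = (if nonneg \<beta> then qmono S (to_nat_vec \<beta>) else (\<lambda>_. 0))"

text \<open>K-derivations of K[x]/I, as maps on qalg S (extended by 0 outside it).\<close>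
definition is_derivation :: "('n \<Rightarrow> nat) set
    \<Rightarrow> ((('n \<Rightarrow> nat) \<Rightarrow> 'k::field) \<Rightarrow> (('n \<Rightarrow> nat) \<Rightarrow> 'k)) \<Rightarrow> bool" where
  "is_derivation S D \<longleftrightarrow>
     (\<forall>f. f \<notin> qalg S \<longrightarrow> D f = (\<lambda>_. 0)) \<and>
     (\<forall>f\<in>qalg S. D f \<in> qalg S) \<and>
     (\<forall>f\<in>qalg S. \<forall>g\<in>qalg S. D (\<lambda>m. f m + g m) = (\<lambda>m. D f m + D g m)) \<and>
     (\<forall>c. \<forall>f\<in>qalg S. D (\<lambda>m. c * f m) = (\<lambda>m. c * D f m)) \<and>
     (\<forall>f\<in>qalg S. \<forall>g\<in>qalg S.
        D (qmult S f g) = (\<lambda>m. qmult S (D f) g m + qmult S f (D g) m))"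

definition weight_space :: "('n \<Rightarrow> nat) set \<Rightarrow> ('n \<Rightarrow> int)
    \<Rightarrow> ((('n \<Rightarrow> nat) \<Rightarrow> 'k::field) \<Rightarrow> (('n \<Rightarrow> nat) \<Rightarrow> 'k)) set" where
  "weight_space S \<alpha> = {D. is_derivation S D \<and>
     (\<forall>m. \<exists>c. D (qmono S m) = (\<lambda>m'. c * qmono_int S (\<lambda>i. int (m i) + \<alpha> i) m'))}"

definition dscale :: "'k::field \<Rightarrow> ((('n \<Rightarrow> nat) \<Rightarrow> 'k) \<Rightarrow> (('n \<Rightarrow> nat) \<Rightarrow> 'k))
    \<Rightarrow> ((('n \<Rightarrow> nat) \<Rightarrow> 'k) \<Rightarrow> (('n \<Rightarrow> nat) \<Rightarrow> 'k))" where
  "dscale c D = (\<lambda>f m. c * D f m)"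

definition dim_weight :: "('n \<Rightarrow> nat) set \<Rightarrow> ('n \<Rightarrow> int) \<Rightarrow> 'k::field itself \<Rightarrow> nat" where
  "dim_weight S \<alpha> _ = vector_space.dim (dscale :: 'k \<Rightarrow> _) (weight_space S \<alpha> :: ((('n \<Rightarrow> nat) \<Rightarrow> 'k) \<Rightarrow> _) set)"

end

theory Submission
  imports Defs "HOL-Library.FuncSet"
begin

lemma finite_le_vec: "finite {a::'n::finite \<Rightarrow> nat. \<forall>i. a i \<le> m i}"
proof -
  have "{a::'n \<Rightarrow> nat. \<forall>i. a i \<le> m i} = Pi\<^sub>E UNIV (\<lambda>i. {..m i})"
    by (auto simp: PiE_UNIV_domain Pi_def)
  thus ?thesis by (simp add: finite_PiE)
qed

lemma qmono_S: "x \<in> S \<Longrightarrow> qmono S m x = 0"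
  by (auto simp: qmono_def)

lemma qmono_in: "m \<in> S \<Longrightarrow> qmono S m = (\<lambda>_. 0)"
  by (auto simp: qmono_def)

lemma qmono_qalg: "qmono S m \<in> qalg S"
  by (auto simp: qalg_def qmono_def)

lemma qint_S: "x \<in> S \<Longrightarrow> qmono_int S u x = 0"
  by (auto simp: qmono_int_def qmono_def)

lemma qmult_qmono:
  fixes S :: "('n::finite \<Rightarrow> nat) set"
  assumes ms: "monomial_support S"
  shows "qmult S (qmono S u :: _ \<Rightarrow> 'k::field) (qmono S v) = qmono S (\<lambda>i. u i + v i)"
proof (rule ext)
  fix x
  show "qmult S (qmono S u :: _ \<Rightarrow> 'k::field) (qmono S v) x = qmono S (\<lambda>i. u i + v i) x"
  proof (cases "x \<in> S")
    case True thus ?thesis by (simp add: qmult_def qmono_S)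
  next
    case False
    have "qmult S (qmono S u :: _ \<Rightarrow> 'k::field) (qmono S v) x =
       (\<Sum>a\<in>{a. \<forall>i. a i \<le> x i}. if a = u then (if u \<notin> S \<and> (\<lambda>i. x i - u i) = v \<and> v \<notin> S then 1 else 0) else 0)"
      unfolding qmult_def qmono_def apply (simp only: if_not_P[OF False])
      by (rule sum.cong[OF refl]) auto
    also have "\<dots> = (if (\<forall>i. u i \<le> x i) \<and> u \<notin> S \<and> (\<lambda>i. x i - u i) = v \<and> v \<notin> S then 1 else 0)"
      by (subst sum.delta[OF finite_le_vec]) auto
    also have "\<dots> = qmono S (\<lambda>i. u i + v i) x"
    proof (cases "x = (\<lambda>i. u i + v i)")
      case True
      have "u \<notin> S" "v \<notin> S" using False True ms unfolding monomial_support_def by force+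
      thus ?thesis using True False by (auto simp: qmono_def)
    next
      case F: False
      have "\<not> ((\<forall>i. u i \<le> x i) \<and> (\<lambda>i. x i - u i) = v)"
      proof
        assume h: "(\<forall>i. u i \<le> x i) \<and> (\<lambda>i. x i - u i) = v"
        hence "x = (\<lambda>i. u i + v i)" by force
        thus False using F by simp
      qed
      thus ?thesis using F by (auto simp: qmono_def)
    qed
    finally show ?thesis .
  qed
qed

lemma qmult_suml:
  "qmult S (\<lambda>x. \<Sum>j\<in>A. c j * F j x) G = (\<lambda>x. \<Sum>j\<in>A. c j * qmult S (F j) G x)"
  unfolding qmult_def
  by (auto simp: sum_distrib_right sum_distrib_left mult.assoc intro!: ext sum.swap)

lemma qmult_sumr:
  "qmult S G (\<lambda>x. \<Sum>j\<in>A. c j * F j x) = (\<lambda>x. \<Sum>j\<in>A. c j * qmult S G (F j) x)"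
  unfolding qmult_def
  by (auto simp: sum_distrib_right sum_distrib_left mult.assoc mult.left_commute intro!: ext sum.swap)

lemma qmult_scalel: "qmult S (\<lambda>x. c * F x) G = (\<lambda>x. c * qmult S F G x)"
  using qmult_suml[where S=S and c="\<lambda>_. c" and A="{()}" and F="\<lambda>_. F" and G=G] by simp

lemma qmult_scaler: "qmult S G (\<lambda>x. c * F x) = (\<lambda>x. c * qmult S G F x)"
  using qmult_sumr[where S=S and c="\<lambda>_. c" and A="{()}" and F="\<lambda>_. F" and G=G] by simp

lemma expand:
  assumes "f \<in> qalg S" "finite (- S)"
  shows "f = (\<lambda>x. \<Sum>m\<in>-S. f m * qmono S m x)"
proof (rule ext)
  fix x
  show "f x = (\<Sum>m\<in>-S. f m * qmono S m x)"
  proof (cases "x \<in> S")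
    case True thus ?thesis using assms by (simp add: qalg_def qmono_S)
  next
    case False
    have "(\<Sum>m\<in>-S. f m * qmono S m x) = (\<Sum>m\<in>-S. if m = x then f x else 0)"
      by (intro sum.cong) (auto simp: qmono_def)
    also have "\<dots> = f x" using False assms(2) by (subst sum.delta) auto
    finally show ?thesis by simp
  qed
qed

definition lin :: "('n \<Rightarrow> nat) set \<Rightarrow> ((('n \<Rightarrow> nat) \<Rightarrow> 'k::field) \<Rightarrow> (('n \<Rightarrow> nat) \<Rightarrow> 'k)) \<Rightarrow> bool" where
  "lin S D \<longleftrightarrow> (\<forall>f\<in>qalg S. \<forall>g\<in>qalg S. D (\<lambda>m. f m + g m) = (\<lambda>m. D f m + D g m)) \<and>
     (\<forall>c. \<forall>f\<in>qalg S. D (\<lambda>m. c * f m) = (\<lambda>m. c * D f m))"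

lemma lin_add: "lin S D \<Longrightarrow> f \<in> qalg S \<Longrightarrow> g \<in> qalg S \<Longrightarrow> D (\<lambda>m. f m + g m) = (\<lambda>m. D f m + D g m)"
  by (simp add: lin_def)

lemma lin_scale: "lin S D \<Longrightarrow> f \<in> qalg S \<Longrightarrow> D (\<lambda>m. c * f m) = (\<lambda>m. c * D f m)"
  by (simp add: lin_def)

lemma der_lin: "is_derivation S D \<Longrightarrow> lin S D"
  by (simp add: is_derivation_def lin_def)

lemma zero_qalg: "(\<lambda>_. 0) \<in> qalg S"
  by (simp add: qalg_def)

lemma lin_zero: assumes "lin S D" shows "D (\<lambda>_. 0) = (\<lambda>_. 0)"
proof -
  have "D (\<lambda>m. 0 * (\<lambda>_. 0) m) = (\<lambda>m. 0 * D (\<lambda>_. 0) m)"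
    using lin_scale[OF assms zero_qalg, of 0] by simp
  thus ?thesis by simp
qed

lemma qalg_sum: "(\<forall>j\<in>A. h j \<in> qalg S) \<Longrightarrow> (\<lambda>x. \<Sum>j\<in>A. c j * h j x) \<in> qalg S"
  by (auto simp: qalg_def)

lemma lin_sum:
  assumes "lin S D" "finite A" "\<forall>j\<in>A. h j \<in> qalg S"
  shows "D (\<lambda>x. \<Sum>j\<in>A. c j * h j x) = (\<lambda>x. \<Sum>j\<in>A. c j * D (h j) x)"
  using assms(2,3)
proof (induction A rule: finite_induct)
  case empty thus ?case using lin_zero[OF assms(1)] by simp
next
  case (insert a A)
  have q1: "(\<lambda>x. c a * h a x) \<in> qalg S" using insert by (auto simp: qalg_def)
  have q2: "(\<lambda>x. \<Sum>j\<in>A. c j * h j x) \<in> qalg S" using insert by (intro qalg_sum) auto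
  have "D (\<lambda>x. \<Sum>j\<in>insert a A. c j * h j x) = D (\<lambda>x. c a * h a x + (\<Sum>j\<in>A. c j * h j x))"
    using insert by simp
  also have "\<dots> = (\<lambda>x. D (\<lambda>x. c a * h a x) x + D (\<lambda>x. \<Sum>j\<in>A. c j * h j x) x)"
    using lin_add[OF assms(1) q1 q2] by simp
  also have "D (\<lambda>x. c a * h a x) = (\<lambda>x. c a * D (h a) x)"
    using lin_scale[OF assms(1), of "h a"] insert by simp
  finally show ?case using insert by simp
qed

lemma lin_expand:
  assumes "lin S D" "finite (- S)" "f \<in> qalg S"
  shows "D f = (\<lambda>x. \<Sum>m\<in>-S. f m * D (qmono S m) x)"
proof -
  have "D f = D (\<lambda>x. \<Sum>m\<in>-S. f m * qmono S m x)" using expand[OF assms(3,2)] by simp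
  also have "\<dots> = (\<lambda>x. \<Sum>m\<in>-S. f m * D (qmono S m) x)"
    using assms by (intro lin_sum) (auto simp: qmono_qalg)
  finally show ?thesis .
qed

lemma mult_expand:
  fixes S :: "('n::finite \<Rightarrow> nat) set"
  assumes ms: "monomial_support S" and fin: "finite (- S)" and f: "f \<in> qalg S" and g: "g \<in> qalg S"
  shows "qmult S f (g :: _ \<Rightarrow> 'k::field) = (\<lambda>x. \<Sum>a\<in>-S. f a * (\<Sum>b\<in>-S. g b * qmono S (\<lambda>i. a i + b i) x))"
proof -
  have "qmult S f g = qmult S (\<lambda>x. \<Sum>a\<in>-S. f a * qmono S a x) (\<lambda>x. \<Sum>b\<in>-S. g b * qmono S b x)"
    using expand[OF f fin] expand[OF g fin] by simp
  also have "\<dots> = (\<lambda>x. \<Sum>a\<in>-S. f a * (\<Sum>b\<in>-S. g b * qmult S (qmono S a) (qmono S b) x))"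
    by (simp add: qmult_suml qmult_sumr)
  finally show ?thesis by (simp add: qmult_qmono[OF ms])
qed

lemma leibniz_from_mono:
  fixes S :: "('n::finite \<Rightarrow> nat) set" and D :: "(('n \<Rightarrow> nat) \<Rightarrow> 'k::field) \<Rightarrow> _"
  assumes ms: "monomial_support S" and fin: "finite (- S)" and L: "lin S D"
    and mono: "\<And>a b. a \<notin> S \<Longrightarrow> b \<notin> S \<Longrightarrow> D (qmono S (\<lambda>i. a i + b i)) =
        (\<lambda>x. qmult S (D (qmono S a)) (qmono S b) x + qmult S (qmono S a) (D (qmono S b)) x)"
    and f: "f \<in> qalg S" and g: "g \<in> qalg S"
  shows "D (qmult S f g) = (\<lambda>m. qmult S (D f) g m + qmult S f (D g) m)"
proof -
  define H where "H a = (\<lambda>x. \<Sum>b\<in>-S. g b * qmono S (\<lambda>i. a i + b i) x)" for a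
  have Hq: "\<forall>a\<in>-S. H a \<in> qalg S" unfolding H_def by (intro ballI qalg_sum) (auto simp: qmono_qalg)
  have DH: "D (H a) = (\<lambda>x. \<Sum>b\<in>-S. g b * D (qmono S (\<lambda>i. a i + b i)) x)" for a
    unfolding H_def using L fin by (intro lin_sum) (auto simp: qmono_qalg)
  have "D (qmult S f g) = D (\<lambda>x. \<Sum>a\<in>-S. f a * H a x)"
    using mult_expand[OF ms fin f g] unfolding H_def by simp
  also have "\<dots> = (\<lambda>x. \<Sum>a\<in>-S. f a * D (H a) x)"
    using L fin Hq by (intro lin_sum) auto
  finally have lhs: "D (qmult S f g) = (\<lambda>x. \<Sum>a\<in>-S. f a * (\<Sum>b\<in>-S. g b *
      (qmult S (D (qmono S a)) (qmono S b) x + qmult S (qmono S a) (D (qmono S b)) x)))"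
    unfolding DH by (auto intro!: ext sum.cong simp: mono)
  have r1: "qmult S (D f) g = (\<lambda>x. \<Sum>a\<in>-S. f a * (\<Sum>b\<in>-S. g b * qmult S (D (qmono S a)) (qmono S b) x))"
  proof -
    have "qmult S (D f) g = qmult S (\<lambda>x. \<Sum>a\<in>-S. f a * D (qmono S a) x) (\<lambda>x. \<Sum>b\<in>-S. g b * qmono S b x)"
      using lin_expand[OF L fin f] expand[OF g fin] by simp
    thus ?thesis by (simp add: qmult_suml qmult_sumr)
  qed
  have r2: "qmult S f (D g) = (\<lambda>x. \<Sum>a\<in>-S. f a * (\<Sum>b\<in>-S. g b * qmult S (qmono S a) (D (qmono S b)) x))"
  proof -
    have "qmult S f (D g) = qmult S (\<lambda>x. \<Sum>a\<in>-S. f a * qmono S a x) (\<lambda>x. \<Sum>b\<in>-S. g b * D (qmono S b) x)"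
      using lin_expand[OF L fin g] expand[OF f fin] by simp
    thus ?thesis by (simp add: qmult_suml qmult_sumr)
  qed
  show ?thesis unfolding lhs r1 r2
    by (simp add: distrib_left sum.distrib)
qed

definition cs :: "('n::finite \<Rightarrow> nat) \<Rightarrow> ('n \<Rightarrow> 'k::field) \<Rightarrow> 'k" where
  "cs m c = (\<Sum>i\<in>UNIV. of_nat (m i) * c i)"

definition W :: "('n::finite \<Rightarrow> nat) set \<Rightarrow> ('n \<Rightarrow> int) \<Rightarrow> ('n \<Rightarrow> 'k::field)
    \<Rightarrow> (('n \<Rightarrow> nat) \<Rightarrow> 'k) \<Rightarrow> (('n \<Rightarrow> nat) \<Rightarrow> 'k)" where
  "W S \<alpha> c f = (if f \<in> qalg S then (\<lambda>x. \<Sum>m\<in>-S. f m * (cs m c * qmono_int S (\<lambda>i. int (m i) + \<alpha> i) x))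
     else (\<lambda>_. 0))"

definition suppE :: "('n::finite \<Rightarrow> nat) set \<Rightarrow> ('n \<Rightarrow> int) \<Rightarrow> ('n \<Rightarrow> 'k::field) \<Rightarrow> bool" where
  "suppE S \<alpha> c \<longleftrightarrow> (\<forall>i. c i \<noteq> 0 \<longrightarrow> i \<in> E_set S \<alpha>)"

definition good :: "('n::finite \<Rightarrow> nat) set \<Rightarrow> ('n \<Rightarrow> int) \<Rightarrow> bool" where
  "good S \<alpha> \<longleftrightarrow> (\<forall>m\<in>S. \<forall>i\<in>E_set S \<alpha>. 1 \<le> m i \<longrightarrow> nonneg (\<lambda>j. int (m j) + \<alpha> j)
      \<longrightarrow> to_nat_vec (\<lambda>j. int (m j) + \<alpha> j) \<in> S)"

lemma cs_add: "cs (\<lambda>i. a i + b i) c = cs a c + cs b c"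
  by (simp add: cs_def sum.distrib distrib_right)

lemma cs_nz: assumes "cs m c \<noteq> 0" obtains i where "c i \<noteq> 0" "1 \<le> m i"
proof -
  from assms obtain i where "of_nat (m i) * c i \<noteq> 0" unfolding cs_def
    by (meson sum.neutral)
  thus ?thesis using that by (cases "m i") auto
qed

lemma E_nonneg: "i \<in> E_set S \<alpha> \<Longrightarrow> 1 \<le> m i \<Longrightarrow> nonneg (\<lambda>j. int (m j) + \<alpha> j)"
proof -
  assume "i \<in> E_set S \<alpha>" "1 \<le> m i"
  hence h: "\<And>j. 0 \<le> \<alpha> j + (if j = i then 1 else 0)" "1 \<le> m i"
    unfolding E_set_def in_suppc_def nonneg_def add_int_def unit_int_def by auto
  show ?thesis unfolding nonneg_def
  proof
    fix j show "0 \<le> int (m j) + \<alpha> j" using h(1)[of j] h(2) by (cases "j = i") auto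
  qed
qed

lemma cs_nonneg: "cs m c \<noteq> 0 \<Longrightarrow> suppE S \<alpha> c \<Longrightarrow> nonneg (\<lambda>j. int (m j) + \<alpha> j)"
  by (metis cs_nz E_nonneg suppE_def)

lemma W_mono:
  assumes "finite (- S)"
  shows "W S \<alpha> c (qmono S m) = (\<lambda>x. if m \<in> S then 0 else cs m c * qmono_int S (\<lambda>i. int (m i) + \<alpha> i) x)"
proof (rule ext)
  fix x
  have "(\<Sum>m'\<in>-S. qmono S m m' * (cs m' c * qmono_int S (\<lambda>i. int (m' i) + \<alpha> i) x))
      = (\<Sum>m'\<in>-S. if m' = m then (if m \<in> S then 0 else cs m c * qmono_int S (\<lambda>i. int (m i) + \<alpha> i) x) else 0)"
    by (intro sum.cong) (auto simp: qmono_def)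
  also have "\<dots> = (if m \<in> S then 0 else cs m c * qmono_int S (\<lambda>i. int (m i) + \<alpha> i) x)"
    using assms by (subst sum.delta) auto
  finally show "W S \<alpha> c (qmono S m) x = (if m \<in> S then 0 else cs m c * qmono_int S (\<lambda>i. int (m i) + \<alpha> i) x)"
    by (simp add: W_def qmono_qalg)
qed

lemma W_lin:
  fixes S :: "('n::finite \<Rightarrow> nat) set" and c :: "'n \<Rightarrow> 'k::field"
  shows "lin S (W S \<alpha> c)"
  unfolding lin_def
proof (intro conjI ballI allI)
  fix f g :: "('n \<Rightarrow> nat) \<Rightarrow> 'k" assume f: "f \<in> qalg S" and g: "g \<in> qalg S"
  hence "(\<lambda>m. f m + g m) \<in> qalg S" by (auto simp: qalg_def)
  thus "W S \<alpha> c (\<lambda>m. f m + g m) = (\<lambda>m. W S \<alpha> c f m + W S \<alpha> c g m)"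
    using f g by (auto simp: W_def distrib_right sum.distrib)
next
  fix k and f :: "('n \<Rightarrow> nat) \<Rightarrow> 'k" assume f: "f \<in> qalg S"
  hence "(\<lambda>m. k * f m) \<in> qalg S" by (auto simp: qalg_def)
  thus "W S \<alpha> c (\<lambda>m. k * f m) = (\<lambda>m. k * W S \<alpha> c f m)"
    using f by (auto simp: W_def sum_distrib_left mult.assoc)
qed

lemma W_qalg: "W S \<alpha> c f \<in> qalg S"
  by (auto simp: W_def qalg_def qint_S)

lemma qmult_qint_l:
  fixes S :: "('n::finite \<Rightarrow> nat) set"
  assumes ms: "monomial_support S" and u: "nonneg u"
  shows "qmult S (qmono_int S u :: _ \<Rightarrow> 'k::field) (qmono S v) = qmono_int S (\<lambda>i. u i + int (v i))"
proof -
  have nn: "nonneg (\<lambda>i. u i + int (v i))" using u by (auto simp: nonneg_def)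
  have e: "to_nat_vec (\<lambda>i. u i + int (v i)) = (\<lambda>i. to_nat_vec u i + v i)"
    using u by (auto simp: to_nat_vec_def nonneg_def nat_add_distrib)
  show ?thesis using u nn by (simp add: qmono_int_def qmult_qmono[OF ms] e)
qed

lemma qmult_qint_r:
  fixes S :: "('n::finite \<Rightarrow> nat) set"
  assumes ms: "monomial_support S" and u: "nonneg u"
  shows "qmult S (qmono S v) (qmono_int S u :: _ \<Rightarrow> 'k::field) = qmono_int S (\<lambda>i. int (v i) + u i)"
proof -
  have nn: "nonneg (\<lambda>i. int (v i) + u i)" using u by (auto simp: nonneg_def)
  have e: "to_nat_vec (\<lambda>i. int (v i) + u i) = (\<lambda>i. v i + to_nat_vec u i)"
    using u by (auto simp: to_nat_vec_def nonneg_def nat_add_distrib)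
  show ?thesis using u nn by (simp add: qmono_int_def qmult_qmono[OF ms] e)
qed

lemma qint_zero: "\<not> nonneg u \<Longrightarrow> qmono_int S u = (\<lambda>_. 0)"
  by (simp add: qmono_int_def)

lemma T1:
  fixes S :: "('n::finite \<Rightarrow> nat) set" and c :: "'n \<Rightarrow> 'k::field"
  assumes ms: "monomial_support S" and sc: "suppE S \<alpha> c"
  shows "cs a c * qmult S (qmono_int S (\<lambda>i. int (a i) + \<alpha> i)) (qmono S b) x
      = cs a c * qmono_int S (\<lambda>i. int (a i + b i) + \<alpha> i) x"
proof (cases "cs a c = 0")
  case False
  hence nn: "nonneg (\<lambda>i. int (a i) + \<alpha> i)" using cs_nonneg sc by blast
  have e: "(\<lambda>i. int (a i) + \<alpha> i + int (b i)) = (\<lambda>i. int (a i + b i) + \<alpha> i)" by auto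
  have "qmult S (qmono_int S (\<lambda>i. int (a i) + \<alpha> i)) (qmono S b) = (qmono_int :: _ \<Rightarrow> _ \<Rightarrow> _ \<Rightarrow> 'k) S (\<lambda>i. int (a i) + \<alpha> i + int (b i))"
    by (rule qmult_qint_l[OF ms nn])
  also have "\<dots> = qmono_int S (\<lambda>i. int (a i + b i) + \<alpha> i)" by (rule arg_cong[where f="qmono_int S"], rule e)
  finally show ?thesis by (simp only:)
qed simp

lemma T2:
  fixes S :: "('n::finite \<Rightarrow> nat) set" and c :: "'n \<Rightarrow> 'k::field"
  assumes ms: "monomial_support S" and sc: "suppE S \<alpha> c"
  shows "cs b c * qmult S (qmono S a) (qmono_int S (\<lambda>i. int (b i) + \<alpha> i)) x
      = cs b c * qmono_int S (\<lambda>i. int (a i + b i) + \<alpha> i) x"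
proof (cases "cs b c = 0")
  case False
  hence nn: "nonneg (\<lambda>i. int (b i) + \<alpha> i)" using cs_nonneg sc by blast
  have e: "(\<lambda>i. int (a i) + (int (b i) + \<alpha> i)) = (\<lambda>i. int (a i + b i) + \<alpha> i)" by auto
  have "qmult S (qmono S a) (qmono_int S (\<lambda>i. int (b i) + \<alpha> i)) = (qmono_int :: _ \<Rightarrow> _ \<Rightarrow> _ \<Rightarrow> 'k) S (\<lambda>i. int (a i) + (int (b i) + \<alpha> i))"
    by (rule qmult_qint_r[OF ms nn])
  also have "\<dots> = qmono_int S (\<lambda>i. int (a i + b i) + \<alpha> i)" by (rule arg_cong[where f="qmono_int S"], rule e)
  finally show ?thesis by (simp only:)
qed simp

lemma W_der:
  fixes S :: "('n::finite \<Rightarrow> nat) set" and c :: "'n \<Rightarrow> 'k::field"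
  assumes ms: "monomial_support S" and fin: "finite (- S)" and gd: "good S \<alpha>" and sc: "suppE S \<alpha> c"
  shows "is_derivation S (W S \<alpha> c)"
proof -
  have mono: "W S \<alpha> c (qmono S (\<lambda>i. a i + b i)) =
        (\<lambda>x. qmult S (W S \<alpha> c (qmono S a)) (qmono S b) x + qmult S (qmono S a) (W S \<alpha> c (qmono S b)) x)"
    if a: "a \<notin> S" and b: "b \<notin> S" for a b
  proof (rule ext)
    fix x
    have "qmult S (W S \<alpha> c (qmono S a)) (qmono S b) x + qmult S (qmono S a) (W S \<alpha> c (qmono S b)) x
      = cs a c * qmult S (qmono_int S (\<lambda>i. int (a i) + \<alpha> i)) (qmono S b) x
        + cs b c * qmult S (qmono S a) (qmono_int S (\<lambda>i. int (b i) + \<alpha> i)) x"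
      using a b by (simp add: W_mono[OF fin] qmult_scalel qmult_scaler)
    also have "\<dots> = cs (\<lambda>i. a i + b i) c * qmono_int S (\<lambda>i. int (a i + b i) + \<alpha> i) x"
      unfolding T1[OF ms sc] T2[OF ms sc] cs_add by (simp add: distrib_right)
    finally have r: "qmult S (W S \<alpha> c (qmono S a)) (qmono S b) x + qmult S (qmono S a) (W S \<alpha> c (qmono S b)) x
      = cs (\<lambda>i. a i + b i) c * qmono_int S (\<lambda>i. int (a i + b i) + \<alpha> i) x" .
    show "W S \<alpha> c (qmono S (\<lambda>i. a i + b i)) x =
        qmult S (W S \<alpha> c (qmono S a)) (qmono S b) x + qmult S (qmono S a) (W S \<alpha> c (qmono S b)) x"
    proof (cases "(\<lambda>i. a i + b i) \<in> S")
      case False thus ?thesis by (simp only: r) (simp add: W_mono[OF fin])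
    next
      case True
      have "cs (\<lambda>i. a i + b i) c * qmono_int S (\<lambda>i. int (a i + b i) + \<alpha> i) x = 0"
      proof (cases "cs (\<lambda>i. a i + b i) c = 0")
        case False
        then obtain i where ci: "c i \<noteq> 0" "1 \<le> a i + b i" by (rule cs_nz)
        hence iE: "i \<in> E_set S \<alpha>" using sc suppE_def by blast
        show ?thesis
        proof (cases "nonneg (\<lambda>i. int (a i + b i) + \<alpha> i)")
          case nn: True
          hence "to_nat_vec (\<lambda>i. int (a i + b i) + \<alpha> i) \<in> S"
            using gd[unfolded good_def, rule_format, OF True iE] ci(2) nn by simp
          thus ?thesis using nn by (simp add: qmono_int_def qmono_def)
        qed (simp add: qmono_int_def)
      qed simp
      thus ?thesis using True by (simp only: r) (simp add: W_mono[OF fin])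
    qed
  qed
  show ?thesis unfolding is_derivation_def
  proof (intro conjI allI ballI impI)
    fix f :: "('n \<Rightarrow> nat) \<Rightarrow> 'k" assume "f \<notin> qalg S" thus "W S \<alpha> c f = (\<lambda>_. 0)" by (simp add: W_def)
  next
    fix f :: "('n \<Rightarrow> nat) \<Rightarrow> 'k" show "W S \<alpha> c f \<in> qalg S" by (rule W_qalg)
  next
    fix f g :: "('n \<Rightarrow> nat) \<Rightarrow> 'k" assume "f \<in> qalg S" "g \<in> qalg S"
    thus "W S \<alpha> c (\<lambda>m. f m + g m) = (\<lambda>m. W S \<alpha> c f m + W S \<alpha> c g m)"
      by (rule lin_add[OF W_lin])
  next
    fix k and f :: "('n \<Rightarrow> nat) \<Rightarrow> 'k" assume "f \<in> qalg S"
    thus "W S \<alpha> c (\<lambda>m. k * f m) = (\<lambda>m. k * W S \<alpha> c f m)"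
      by (rule lin_scale[OF W_lin])
  next
    fix f g :: "('n \<Rightarrow> nat) \<Rightarrow> 'k" assume "f \<in> qalg S" "g \<in> qalg S"
    thus "W S \<alpha> c (qmult S f g) = (\<lambda>m. qmult S (W S \<alpha> c f) g m + qmult S f (W S \<alpha> c g) m)"
      using leibniz_from_mono[OF ms fin W_lin mono] by blast
  qed
qed

lemma W_weight:
  fixes S :: "('n::finite \<Rightarrow> nat) set" and c :: "'n \<Rightarrow> 'k::field"
  assumes ms: "monomial_support S" and fin: "finite (- S)" and gd: "good S \<alpha>" and sc: "suppE S \<alpha> c"
  shows "W S \<alpha> c \<in> weight_space S \<alpha>"
  unfolding weight_space_def
proof (intro CollectI conjI allI W_der[OF assms])
  fix m
  show "\<exists>c'. W S \<alpha> c (qmono S m) = (\<lambda>m'. c' * qmono_int S (\<lambda>i. int (m i) + \<alpha> i) m')"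
    by (rule exI[of _ "if m \<in> S then 0 else cs m c"]) (auto simp: W_mono[OF fin])
qed

lemma cs_unit: "cs (unit_nat j) c = c j"
proof -
  have "cs (unit_nat j) c = (\<Sum>i\<in>UNIV. if i = j then c i else 0)"
    unfolding cs_def by (intro sum.cong) (auto simp: unit_nat_def)
  thus ?thesis by simp
qed

lemma cs_zero: "cs (\<lambda>_. 0) c = 0"
  by (simp add: cs_def)

lemma unit_r:
  fixes S :: "('n::finite \<Rightarrow> nat) set"
  assumes ms: "monomial_support S" and fin: "finite (- S)" and F: "F \<in> qalg S"
  shows "qmult S F (qmono S (\<lambda>_. 0) :: _ \<Rightarrow> 'k::field) = F"
proof -
  have "qmult S F (qmono S (\<lambda>_. 0) :: _ \<Rightarrow> 'k::field) = qmult S (\<lambda>x. \<Sum>m\<in>-S. F m * qmono S m x) (qmono S (\<lambda>_. 0))"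
    using expand[OF F fin] by simp
  also have "\<dots> = (\<lambda>x. \<Sum>m\<in>-S. F m * qmono S m x)"
    by (simp add: qmult_suml qmult_qmono[OF ms])
  finally show ?thesis using expand[OF F fin] by simp
qed

lemma unit_l:
  fixes S :: "('n::finite \<Rightarrow> nat) set"
  assumes ms: "monomial_support S" and fin: "finite (- S)" and F: "F \<in> qalg S"
  shows "qmult S (qmono S (\<lambda>_. 0) :: _ \<Rightarrow> 'k::field) F = F"
proof -
  have "qmult S (qmono S (\<lambda>_. 0) :: _ \<Rightarrow> 'k::field) F = qmult S (qmono S (\<lambda>_. 0)) (\<lambda>x. \<Sum>m\<in>-S. F m * qmono S m x)"
    using expand[OF F fin] by simp
  also have "\<dots> = (\<lambda>x. \<Sum>m\<in>-S. F m * qmono S m x)"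
    by (simp add: qmult_sumr qmult_qmono[OF ms])
  finally show ?thesis using expand[OF F fin] by simp
qed

lemma qint_notE:
  assumes "i \<notin> E_set S \<alpha>"
  shows "qmono_int S (\<lambda>j. int (unit_nat i j) + \<alpha> j) = (\<lambda>_. 0)"
proof -
  have e: "(\<lambda>j. int (unit_nat i j) + \<alpha> j) = add_int \<alpha> (unit_int i)"
    by (auto simp: add_int_def unit_int_def unit_nat_def)
  show ?thesis using assms unfolding e E_set_def in_suppc_def
    by (auto simp: qmono_int_def qmono_def)
qed

lemma der_det:
  fixes S :: "('n::finite \<Rightarrow> nat) set" and D :: "(('n \<Rightarrow> nat) \<Rightarrow> 'k::field) \<Rightarrow> _"
  assumes ms: "monomial_support S" and fin: "finite (- S)" and Dw: "D \<in> weight_space S \<alpha>"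
  obtains c where "suppE S \<alpha> c" "D = W S \<alpha> c"
proof -
  have der: "is_derivation S D" and wt: "\<And>m. \<exists>k. D (qmono S m) = (\<lambda>m'. k * qmono_int S (\<lambda>i. int (m i) + \<alpha> i) m')"
    using Dw unfolding weight_space_def by auto
  have L: "lin S D" using der by (rule der_lin)
  have Dq: "D f \<in> qalg S" if "f \<in> qalg S" for f using der that unfolding is_derivation_def by blast
  have leib: "D (qmult S f g) = (\<lambda>m. qmult S (D f) g m + qmult S f (D g) m)" if "f \<in> qalg S" "g \<in> qalg S" for f g
    using der that unfolding is_derivation_def by blast
  define c where "c i = (if i \<in> E_set S \<alpha> then (SOME k. D (qmono S (unit_nat i)) =
      (\<lambda>m'. k * qmono_int S (\<lambda>j. int (unit_nat i j) + \<alpha> j) m')) else 0)" for i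
  have ce: "D (qmono S (unit_nat i)) = (\<lambda>x. c i * qmono_int S (\<lambda>j. int (unit_nat i j) + \<alpha> j) x)" for i
  proof (cases "i \<in> E_set S \<alpha>")
    case True thus ?thesis unfolding c_def using someI_ex[OF wt[of "unit_nat i"]] by simp
  next
    case False
    obtain k where "D (qmono S (unit_nat i)) = (\<lambda>m'. k * qmono_int S (\<lambda>j. int (unit_nat i j) + \<alpha> j) m')"
      using wt by blast
    moreover have "\<And>x. (qmono_int S (\<lambda>j. int (unit_nat i j) + \<alpha> j) x :: 'k) = 0"
      using qint_notE[OF False] by metis
    ultimately show ?thesis using False by (simp add: c_def)
  qed
  have sc: "suppE S \<alpha> c" unfolding suppE_def c_def by auto
  have main: "\<forall>m. sum m UNIV = n \<longrightarrow> m \<notin> S \<longrightarrow>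
       D (qmono S m) = (\<lambda>x. cs m c * qmono_int S (\<lambda>i. int (m i) + \<alpha> i) x)" for n
  proof (induction n)
    case 0
    show ?case
    proof (intro allI impI)
      fix m :: "'n \<Rightarrow> nat" assume "sum m UNIV = 0" "m \<notin> S"
      hence m0: "m = (\<lambda>_. 0)" by (auto simp: sum_eq_0_iff)
      have q0: "qmono S (\<lambda>_. 0) = qmult S (qmono S (\<lambda>_. 0)) (qmono S (\<lambda>_. 0) :: _ \<Rightarrow> 'k)"
        by (simp add: qmult_qmono[OF ms])
      have "D (qmono S (\<lambda>_. 0)) = (\<lambda>x. D (qmono S (\<lambda>_. 0)) x + D (qmono S (\<lambda>_. 0)) x)"
        apply (subst q0)
        apply (subst leib[OF qmono_qalg qmono_qalg])
        by (simp add: unit_r[OF ms fin Dq[OF qmono_qalg]] unit_l[OF ms fin Dq[OF qmono_qalg]])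
      hence "\<And>x. D (qmono S (\<lambda>_. 0)) x = D (qmono S (\<lambda>_. 0)) x + D (qmono S (\<lambda>_. 0)) x"
        by (metis (mono_tags))
      hence "\<And>x. D (qmono S (\<lambda>_. 0)) x = 0" by (metis add_left_cancel add.right_neutral)
      hence "D (qmono S (\<lambda>_. 0)) = (\<lambda>_. 0)" by (rule ext)
      thus "D (qmono S m) = (\<lambda>x. cs m c * qmono_int S (\<lambda>i. int (m i) + \<alpha> i) x)"
        using m0 by (simp add: cs_zero)
    qed
  next
    case (Suc n)
    show ?case
    proof (intro allI impI)
      fix m :: "'n \<Rightarrow> nat" assume sm: "sum m UNIV = Suc n" and mS: "m \<notin> S"
      have "\<exists>j. m j \<noteq> 0"
      proof (rule ccontr)
        assume "\<not> ?thesis" hence "m = (\<lambda>_. 0)" by auto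
        thus False using sm by simp
      qed
      then obtain j where mj: "m j \<noteq> 0" by blast
      define m' where "m' = m(j := m j - 1)"
      have meq: "m = (\<lambda>i. m' i + unit_nat j i)" using mj by (auto simp: m'_def unit_nat_def)
      have "sum m UNIV = m j + sum m (UNIV - {j})" by (simp add: sum.remove)
      moreover have "sum m' UNIV = m' j + sum m' (UNIV - {j})" by (simp add: sum.remove)
      moreover have "sum m' (UNIV - {j}) = sum m (UNIV - {j})" by (intro sum.cong) (auto simp: m'_def)
      ultimately have sm': "sum m' UNIV = n" using sm mj by (simp add: m'_def)
      have m'S: "m' \<notin> S"
      proof
        assume "m' \<in> S"
        moreover have "\<forall>i. m' i \<le> m i" by (simp add: meq)
        ultimately have "m \<in> S" using ms unfolding monomial_support_def by blast
        thus False using mS by simp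
      qed
      have ej: "unit_nat j \<notin> S"
      proof
        assume "unit_nat j \<in> S"
        moreover have "\<forall>i. unit_nat j i \<le> m i" by (simp add: meq)
        ultimately have "m \<in> S" using ms unfolding monomial_support_def by blast
        thus False using mS by simp
      qed
      have IH: "D (qmono S m') = (\<lambda>x. cs m' c * qmono_int S (\<lambda>i. int (m' i) + \<alpha> i) x)"
        using Suc.IH sm' m'S by blast
      have "D (qmono S m) = D (qmult S (qmono S m') (qmono S (unit_nat j)))"
        by (simp add: qmult_qmono[OF ms] meq[symmetric])
      also have "\<dots> = (\<lambda>x. qmult S (D (qmono S m')) (qmono S (unit_nat j)) x + qmult S (qmono S m') (D (qmono S (unit_nat j))) x)"
        by (rule leib[OF qmono_qalg qmono_qalg])
      also have "\<dots> = (\<lambda>x. cs m' c * qmult S (qmono_int S (\<lambda>i. int (m' i) + \<alpha> i)) (qmono S (unit_nat j)) x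
           + cs (unit_nat j) c * qmult S (qmono S m') (qmono_int S (\<lambda>i. int (unit_nat j i) + \<alpha> i)) x)"
        unfolding IH ce cs_unit by (simp add: qmult_scalel qmult_scaler)
      also have "\<dots> = (\<lambda>x. cs m c * qmono_int S (\<lambda>i. int (m i) + \<alpha> i) x)"
        unfolding T1[OF ms sc] T2[OF ms sc] meq cs_add by (simp add: distrib_right)
      finally show "D (qmono S m) = (\<lambda>x. cs m c * qmono_int S (\<lambda>i. int (m i) + \<alpha> i) x)" .
    qed
  qed
  have mono: "D (qmono S m) = (\<lambda>x. cs m c * qmono_int S (\<lambda>i. int (m i) + \<alpha> i) x)" if "m \<notin> S" for m
    using main that by blast
  have "D = W S \<alpha> c"
  proof (rule ext)
    fix f :: "('n \<Rightarrow> nat) \<Rightarrow> 'k"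
    show "D f = W S \<alpha> c f"
    proof (cases "f \<in> qalg S")
      case True
      show ?thesis unfolding lin_expand[OF L fin True] using True
        by (auto simp: W_def mono intro!: ext sum.cong)
    next
      case False thus ?thesis using der by (simp add: is_derivation_def W_def)
    qed
  qed
  thus ?thesis using sc that by blast
qed

lemma fsum_apply: "(\<Sum>v\<in>A. F v) x = (\<Sum>v\<in>A. F v x)"
  by (induction A rule: infinite_finite_induct) auto

lemma vs: "vector_space (dscale :: 'k::field \<Rightarrow> _ \<Rightarrow> ((('n \<Rightarrow> nat) \<Rightarrow> 'k) \<Rightarrow> (('n \<Rightarrow> nat) \<Rightarrow> 'k)))"
  by unfold_locales (auto simp: dscale_def algebra_simps intro!: ext)

definition delta :: "'n \<Rightarrow> 'n \<Rightarrow> 'k::field" where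
  "delta i = (\<lambda>j. if j = i then 1 else 0)"

lemma cs_delta: "cs m (delta i) = of_nat (m i)"
proof -
  have "cs m (delta i) = (\<Sum>j\<in>UNIV. if j = i then of_nat (m i) else 0)"
    unfolding cs_def by (intro sum.cong) (auto simp: delta_def)
  thus ?thesis by simp
qed

lemma W_comb:
  fixes S :: "('n::finite \<Rightarrow> nat) set" and c :: "'n \<Rightarrow> 'k::field"
  assumes sc: "suppE S \<alpha> c"
  shows "W S \<alpha> c f x = (\<Sum>i\<in>E_set S \<alpha>. c i * W S \<alpha> (delta i) f x)"
proof (cases "f \<in> qalg S")
  case True
  have csE: "cs m c = (\<Sum>i\<in>E_set S \<alpha>. c i * of_nat (m i))" for m
  proof -
    have "cs m c = (\<Sum>i\<in>UNIV. if i \<in> E_set S \<alpha> then c i * of_nat (m i) else 0)"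
      unfolding cs_def using sc unfolding suppE_def by (intro sum.cong) auto
    thus ?thesis by (simp add: sum.If_cases)
  qed
  let ?q = "\<lambda>m. qmono_int S (\<lambda>i. int (m i) + \<alpha> i) x"
  have "W S \<alpha> c f x = (\<Sum>m\<in>-S. \<Sum>i\<in>E_set S \<alpha>. c i * (f m * (of_nat (m i) * ?q m)))"
    using True by (simp add: W_def csE sum_distrib_left sum_distrib_right mult_ac)
  also have "\<dots> = (\<Sum>i\<in>E_set S \<alpha>. \<Sum>m\<in>-S. c i * (f m * (of_nat (m i) * ?q m)))"
    by (rule sum.swap)
  also have "\<dots> = (\<Sum>i\<in>E_set S \<alpha>. c i * W S \<alpha> (delta i) f x)"
    using True by (simp add: W_def cs_delta sum_distrib_left)
  finally show ?thesis .
qed (simp add: W_def)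

lemma W_eval:
  fixes S :: "('n::finite \<Rightarrow> nat) set"
  assumes fin: "finite (- S)" and full: "full_support S" and j: "j \<in> E_set S \<alpha>"
  shows "W S \<alpha> (delta i :: _ \<Rightarrow> 'k::field) (qmono S (unit_nat j)) (to_nat_vec (add_int \<alpha> (unit_int j)))
     = (if i = j then 1 else 0)"
proof -
  have e: "(\<lambda>k. int (unit_nat j k) + \<alpha> k) = add_int \<alpha> (unit_int j)"
    by (auto simp: add_int_def unit_int_def unit_nat_def)
  have nS: "unit_nat j \<notin> S" using full by (simp add: full_support_def)
  have q: "qmono_int S (add_int \<alpha> (unit_int j)) (to_nat_vec (add_int \<alpha> (unit_int j))) = (1::'k)"
    using j by (simp add: E_set_def in_suppc_def qmono_int_def qmono_def)
  show ?thesis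
    using nS by (simp add: W_mono[OF fin] e q cs_delta) (simp add: unit_nat_def)
qed

lemma dim_good:
  fixes S :: "('n::finite \<Rightarrow> nat) set" and K :: "'k::field itself"
  assumes ms: "monomial_support S" and full: "full_support S" and fin: "finite (- S)" and gd: "good S \<alpha>"
  shows "dim_weight S \<alpha> K = card (E_set S \<alpha>)"
proof -
  interpret V: vector_space "dscale :: 'k \<Rightarrow> _ \<Rightarrow> ((('n \<Rightarrow> nat) \<Rightarrow> 'k) \<Rightarrow> (('n \<Rightarrow> nat) \<Rightarrow> 'k))"
    by (rule vs)
  let ?E = "E_set S \<alpha>"
  let ?B = "(\<lambda>i. W S \<alpha> (delta i :: _ \<Rightarrow> 'k)) ` ?E"
  define p where "p j = to_nat_vec (add_int \<alpha> (unit_int j))" for j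
  have ev: "i \<in> ?E \<Longrightarrow> j \<in> ?E \<Longrightarrow> W S \<alpha> (delta i :: _ \<Rightarrow> 'k) (qmono S (unit_nat j)) (p j) = (if i = j then 1 else 0)" for i j
    unfolding p_def by (rule W_eval[OF fin full])
  have inj: "inj_on (\<lambda>i. W S \<alpha> (delta i :: _ \<Rightarrow> 'k)) ?E"
  proof (rule inj_onI)
    fix i j assume i: "i \<in> ?E" and j: "j \<in> ?E" and h: "W S \<alpha> (delta i :: _ \<Rightarrow> 'k) = W S \<alpha> (delta j)"
    have "W S \<alpha> (delta i :: _ \<Rightarrow> 'k) (qmono S (unit_nat j)) (p j) = 1" using h ev[OF j j] by simp
    thus "i = j" using ev[OF i j] by (auto split: if_splits)
  qed
  have sd: "suppE S \<alpha> (delta i :: _ \<Rightarrow> 'k)" if "i \<in> ?E" for i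
    using that by (auto simp: suppE_def delta_def)
  show ?thesis unfolding dim_weight_def
  proof (rule V.dim_unique[where B = ?B])
    show "?B \<subseteq> weight_space S \<alpha>" using W_weight[OF ms fin gd sd] by blast
  next
    show "weight_space S \<alpha> \<subseteq> V.span ?B"
    proof
      fix D :: "(('n \<Rightarrow> nat) \<Rightarrow> 'k) \<Rightarrow> (('n \<Rightarrow> nat) \<Rightarrow> 'k)" assume "D \<in> weight_space S \<alpha>"
      then obtain c where sc: "suppE S \<alpha> c" and D: "D = W S \<alpha> c" by (rule der_det[OF ms fin])
      have "D = (\<Sum>i\<in>?E. dscale (c i) (W S \<alpha> (delta i)))"
      proof (intro ext)
        fix f x
        have "(\<Sum>i\<in>?E. dscale (c i) (W S \<alpha> (delta i))) f x = (\<Sum>i\<in>?E. c i * W S \<alpha> (delta i) f x)"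
          by (simp add: fsum_apply dscale_def)
        also have "\<dots> = D f x" unfolding D by (rule W_comb[OF sc, symmetric])
        finally show "D f x = (\<Sum>i\<in>?E. dscale (c i) (W S \<alpha> (delta i))) f x" by simp
      qed
      also have "\<dots> \<in> V.span ?B"
        by (intro V.span_sum V.span_scale V.span_base) auto
      finally show "D \<in> V.span ?B" .
    qed
  next
    have ind: "u v = 0" if t: "finite t" "t \<subseteq> ?B" and s0: "(\<Sum>v\<in>t. dscale (u v) v) = 0" and v: "v \<in> t"
      for t u v
    proof -
      have "v \<in> ?B" using subsetD[OF t(2) v] .
      then obtain j where vj: "v = W S \<alpha> (delta j)" and j: "j \<in> ?E" by (rule imageE)
      have "0 = (\<Sum>v\<in>t. dscale (u v) v) (qmono S (unit_nat j)) (p j)" unfolding s0 zero_fun_def by (rule refl)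
      also have "\<dots> = (\<Sum>w\<in>t. u w * w (qmono S (unit_nat j)) (p j))"
        unfolding fsum_apply dscale_def by (rule refl)
      also have "\<dots> = (\<Sum>w\<in>t. if w = v then u v else 0)"
      proof (rule sum.cong[OF refl])
        fix w assume "w \<in> t"
        hence "w \<in> ?B" using t(2) by (rule subsetD[rotated])
        then obtain i where wi: "w = W S \<alpha> (delta i)" and i: "i \<in> ?E" by (rule imageE)
        show "u w * w (qmono S (unit_nat j)) (p j) = (if w = v then u v else 0)"
        proof (cases "i = j")
          case True
          have "w = v" unfolding wi vj True by (rule refl)
          have e1: "w (qmono S (unit_nat j)) (p j) = 1" unfolding wi using ev[OF i j] True by (simp only: if_True refl)
          show ?thesis unfolding e1 using \<open>w = v\<close> by (simp only: simp_thms if_True mult_1_right)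
        next
          case False
          have "w \<noteq> v"
          proof
            assume "w = v"
            hence "W S \<alpha> (delta i :: _ \<Rightarrow> 'k) = W S \<alpha> (delta j)" unfolding wi vj .
            hence "i = j" by (rule inj_onD[OF inj _ i j])
            thus False using False by (rule notE[rotated])
          qed
          have e1: "w (qmono S (unit_nat j)) (p j) = 0" unfolding wi using ev[OF i j] False by (simp only: if_False)
          show ?thesis unfolding e1 using \<open>w \<noteq> v\<close> by (simp only: if_False mult_zero_right)
        qed
      qed
      also have "\<dots> = (if v \<in> t then u v else 0)" by (rule sum.delta[OF t(1)])
      also have "\<dots> = u v" by (rule if_P[OF v])
      finally show "u v = 0" by (rule sym)
    qed
    show "V.independent ?B"
      unfolding V.independent_explicit_module using ind by blast
  next
    show "card ?B = card ?E" by (rule card_image[OF inj])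
  qed
qed


lemma good_nonneg:
  fixes S :: "('n::finite \<Rightarrow> nat) set"
  assumes ms: "monomial_support S" and nn: "nonneg \<alpha>"
  shows "good S \<alpha>"
  unfolding good_def
proof (intro ballI impI)
  fix m i assume m: "m \<in> S"
  have "\<forall>j. m j \<le> to_nat_vec (\<lambda>j. int (m j) + \<alpha> j) j"
    using nn by (auto simp: nonneg_def to_nat_vec_def le_nat_iff)
  thus "to_nat_vec (\<lambda>j. int (m j) + \<alpha> j) \<in> S" using ms m unfolding monomial_support_def by blast
qed

lemma alpha_k:
  assumes "\<not> nonneg \<alpha>" "nonneg (add_int \<alpha> (unit_int k))"
  shows "\<alpha> k = -1" "\<And>j. j \<noteq> k \<Longrightarrow> 0 \<le> \<alpha> j"
proof -
  have h: "0 \<le> \<alpha> j + (if j = k then 1 else 0)" for j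
    using assms(2) by (auto simp: nonneg_def add_int_def unit_int_def)
  show "\<And>j. j \<noteq> k \<Longrightarrow> 0 \<le> \<alpha> j" using h by (metis add.right_neutral)
  obtain j where "\<alpha> j < 0" using assms(1) by (auto simp: nonneg_def not_le)
  hence "j = k" using h[of j] by (auto split: if_splits)
  thus "\<alpha> k = -1" using h[of k] \<open>\<alpha> j < 0\<close> by auto
qed

lemma E_alpha:
  assumes "\<not> nonneg \<alpha>" "nonneg (add_int \<alpha> (unit_int k))"
  shows "E_set S \<alpha> = (if in_suppc S (add_int \<alpha> (unit_int k)) then {k} else {})"
proof -
  have "i \<notin> E_set S \<alpha>" if "i \<noteq> k" for i
  proof
    assume "i \<in> E_set S \<alpha>"
    hence "0 \<le> add_int \<alpha> (unit_int i) k" by (auto simp: E_set_def in_suppc_def nonneg_def)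
    thus False using alpha_k(1)[OF assms] that by (simp add: add_int_def unit_int_def)
  qed
  note ne = this
  show ?thesis
  proof (cases "in_suppc S (add_int \<alpha> (unit_int k))")
    case True
    thus ?thesis using ne by (auto simp: E_set_def)
  next
    case False
    have "x \<notin> E_set S \<alpha>" for x
      by (cases "x = k") (use ne False in \<open>auto simp: E_set_def\<close>)
    thus ?thesis using False by auto
  qed
qed

lemma good_case2:
  fixes S :: "('n::finite \<Rightarrow> nat) set"
  assumes ms: "monomial_support S" and full: "full_support S"
    and a: "\<not> nonneg \<alpha>" and b: "nonneg (add_int \<alpha> (unit_int k))"
    and Eb: "E_set S (add_int \<alpha> (unit_int k)) = {}"
  shows "good S \<alpha>"
  unfolding good_def
proof (intro ballI impI)
  fix m i assume m: "m \<in> S" and i: "i \<in> E_set S \<alpha>" and mi: "1 \<le> m i"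
  have ik: "i = k" using i E_alpha[OF a b, of S] by (auto split: if_splits)
  have mk: "1 \<le> m k" using mi ik by simp
  have "m \<noteq> unit_nat k" using m full by (auto simp: full_support_def)
  then obtain j where j: "unit_nat k j + 1 \<le> m j"
  proof -
    obtain j where "m j \<noteq> unit_nat k j" using \<open>m \<noteq> unit_nat k\<close> by auto
    hence "unit_nat k j + 1 \<le> m j"
      using mk by (cases "j = k") (auto simp: unit_nat_def)
    thus ?thesis using that by blast
  qed
  let ?g = "add_int (add_int \<alpha> (unit_int k)) (unit_int j)"
  have gn: "nonneg ?g" using b by (auto simp: nonneg_def add_int_def unit_int_def)
  have "\<not> in_suppc S ?g" using Eb by (auto simp: E_set_def)
  hence gS: "to_nat_vec ?g \<in> S" using gn by (simp add: in_suppc_def)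
  have le: "\<forall>l. to_nat_vec ?g l \<le> to_nat_vec (\<lambda>j. int (m j) + \<alpha> j) l"
  proof
    fix l
    have "int (unit_nat k l) + int (unit_nat j l) \<le> int (m l)"
      using j mk by (auto simp: unit_nat_def split: if_splits)
    thus "to_nat_vec ?g l \<le> to_nat_vec (\<lambda>j. int (m j) + \<alpha> j) l"
      by (auto simp: to_nat_vec_def add_int_def unit_int_def unit_nat_def split: if_splits)
  qed
  show "to_nat_vec (\<lambda>j. int (m j) + \<alpha> j) \<in> S"
    using ms gS le unfolding monomial_support_def by blast
qed

theorem lemma3p1:
  fixes S :: "('n::finite \<Rightarrow> nat) set"
    and \<alpha> :: "'n \<Rightarrow> int"
    and K :: "'k::field_char_0 itself"
  assumes "monomial_support S"
    and "full_support S"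
    and "finite (- S)"
  shows "(nonneg \<alpha> \<longrightarrow> dim_weight S \<alpha> K = card (E_set S \<alpha>))
    \<and> (\<forall>k. \<not> nonneg \<alpha> \<and> nonneg (add_int \<alpha> (unit_int k))
           \<and> dim_weight S (add_int \<alpha> (unit_int k)) K = 0
         \<longrightarrow> dim_weight S \<alpha> K = card (E_set S \<alpha>)
             \<and> card (E_set S \<alpha>) = (if in_suppc S (add_int \<alpha> (unit_int k)) then 1 else 0))"
proof (intro conjI impI allI)
  assume "nonneg \<alpha>"
  thus "dim_weight S \<alpha> K = card (E_set S \<alpha>)"
    by (intro dim_good assms good_nonneg)
next
  fix k assume h: "\<not> nonneg \<alpha> \<and> nonneg (add_int \<alpha> (unit_int k)) \<and> dim_weight S (add_int \<alpha> (unit_int k)) K = 0"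
  hence a: "\<not> nonneg \<alpha>" and b: "nonneg (add_int \<alpha> (unit_int k))"
    and d: "dim_weight S (add_int \<alpha> (unit_int k)) K = 0" by auto
  have "card (E_set S (add_int \<alpha> (unit_int k))) = 0"
    using d dim_good[OF assms good_nonneg[OF assms(1) b], of K] by simp
  hence Eb: "E_set S (add_int \<alpha> (unit_int k)) = {}" by simp
  show "dim_weight S \<alpha> K = card (E_set S \<alpha>)"
    by (rule dim_good[OF assms good_case2[OF assms(1,2) a b Eb]])
  show "card (E_set S \<alpha>) = (if in_suppc S (add_int \<alpha> (unit_int k)) then 1 else 0)"
    using E_alpha[OF a b, of S] by simp
qed

end
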